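(* Let $X$ be an $X$-set parameter and let $G$ and $G'$ be graphs with no isolated vertices. Suppose $\varphi:\mathscr{X}^{\rm TAR}(G)\to\mathscr{X}^{\rm TAR}(G')$ is a graph isomorphism such that $|\varphi(S)|=|S|$ for every $X$-set $S$ of $G$. Then $\varphi$ maps minimal $X$-sets of $G$ to minimal $X$-sets of $G'$ of the same size.
   Context: All graphs are simple, finite, with nonempty vertex set. An $X$-set parameter is a graph parameter $X(G)$ defined as the minimum cardinality of an $X$-set of $G$, where the $X$-sets of each graph are subsets of its vertex set determined by some property satisfying: (1) supersets (within $V(G)$) of $X$-sets are $X$-sets; (2) the empty set is never an $X$-set; (3) an $X$-set of a disconnected graph is the union of an $X$-set of each component; (4) if $G$ has no isolated vertices, every set of $|V(G)|-1$ vertices is an $X$-set. The $X$-TAR graph $\mathscr{X}^{\rm TAR}(G)$ has as vertices all $X$-sets of $G$, with $S_1,S_2$ adjacent iff $|S_1\ominus S_2|=1$ (symmetric difference). A minimal $X$-set is one containing no proper subset that is an $X$-set. *)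

theory Defs
  imports Main
begin

type_synonym 'a graph = "'a set \<times> 'a set set"

definition verts :: "'a graph \<Rightarrow> 'a set" where "verts G = fst G"
definition edges :: "'a graph \<Rightarrow> 'a set set" where "edges G = snd G"

definition is_graph :: "'a graph \<Rightarrow> bool" where
  "is_graph G \<longleftrightarrow> finite (verts G) \<and> verts G \<noteq> {} \<and>
     (\<forall>e\<in>edges G. e \<subseteq> verts G \<and> card e = 2)"

definition no_isolated :: "'a graph \<Rightarrow> bool" where
  "no_isolated G \<longleftrightarrow> (\<forall>v\<in>verts G. \<exists>e\<in>edges G. v \<in> e)"

definition adj_rel :: "'a graph \<Rightarrow> ('a \<times> 'a) set" where
  "adj_rel G = {(u, v). {u, v} \<in> edges G}"

definition comp_verts :: "'a graph \<Rightarrow> 'a \<Rightarrow> 'a set" where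
  "comp_verts G v = {u \<in> verts G. (v, u) \<in> (adj_rel G)\<^sup>*}"

definition induced :: "'a graph \<Rightarrow> 'a set \<Rightarrow> 'a graph" where
  "induced G C = (C, {e \<in> edges G. e \<subseteq> C})"

definition components :: "'a graph \<Rightarrow> 'a graph set" where
  "components G = {induced G (comp_verts G v) | v. v \<in> verts G}"

definition Xset_param :: "('a graph \<Rightarrow> 'a set set) \<Rightarrow> bool" where
  "Xset_param Xs \<longleftrightarrow>
     (\<forall>G. is_graph G \<longrightarrow> Xs G \<subseteq> Pow (verts G)) \<and>
     (\<forall>G S T. is_graph G \<longrightarrow> S \<in> Xs G \<longrightarrow> S \<subseteq> T \<longrightarrow> T \<subseteq> verts G \<longrightarrow> T \<in> Xs G) \<and>
     (\<forall>G. is_graph G \<longrightarrow> {} \<notin> Xs G) \<and>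
     (\<forall>G S. is_graph G \<longrightarrow> S \<subseteq> verts G \<longrightarrow>
        (S \<in> Xs G \<longleftrightarrow> (\<forall>C\<in>components G. S \<inter> verts C \<in> Xs C))) \<and>
     (\<forall>G. is_graph G \<longrightarrow> no_isolated G \<longrightarrow>
        (\<forall>S. S \<subseteq> verts G \<longrightarrow> card S = card (verts G) - 1 \<longrightarrow> S \<in> Xs G))"

definition sym_diff :: "'a set \<Rightarrow> 'a set \<Rightarrow> 'a set" where
  "sym_diff A B = (A - B) \<union> (B - A)"

text \<open>Adjacency in the X-TAR graph (whose vertex set is Xs G).\<close>
definition tar_adj :: "'a set \<Rightarrow> 'a set \<Rightarrow> bool" where
  "tar_adj S T \<longleftrightarrow> card (sym_diff S T) = 1"

definition tar_iso ::
  "('a graph \<Rightarrow> 'a set set) \<Rightarrow> 'a graph \<Rightarrow> 'a graph \<Rightarrow> ('a set \<Rightarrow> 'a set) \<Rightarrow> bool" where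
  "tar_iso Xs G G' \<phi> \<longleftrightarrow> bij_betw \<phi> (Xs G) (Xs G') \<and>
     (\<forall>S\<in>Xs G. \<forall>T\<in>Xs G. tar_adj S T \<longleftrightarrow> tar_adj (\<phi> S) (\<phi> T))"

definition minimal_Xset :: "('a graph \<Rightarrow> 'a set set) \<Rightarrow> 'a graph \<Rightarrow> 'a set \<Rightarrow> bool" where
  "minimal_Xset Xs G S \<longleftrightarrow> S \<in> Xs G \<and> (\<forall>T. T \<subset> S \<longrightarrow> T \<notin> Xs G)"

end

theory Submission
  imports Defs
begin

lemma symdiff_sub:
  assumes "finite A" "finite B" "card (sym_diff A B) = 1" "card B < card A"
  shows "B \<subset> A"
proof -
  have ez: "\<exists>z. sym_diff A B = {z}" using assms(3) unfolding One_nat_def card_1_singleton_iff .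
  then obtain z where z: "sym_diff A B = {z}" by (elim exE)
  have u: "\<And>y. (y \<in> A \<and> y \<notin> B) \<or> (y \<in> B \<and> y \<notin> A) \<longleftrightarrow> y = z"
  proof -
    fix y
    have "y \<in> sym_diff A B \<longleftrightarrow> y \<in> {z}" using z by (rule arg_cong)
    then show "(y \<in> A \<and> y \<notin> B) \<or> (y \<in> B \<and> y \<notin> A) \<longleftrightarrow> y = z"
      unfolding sym_diff_def by simp
  qed
  show ?thesis
  proof (cases "z \<in> A")
    case False
    have "A \<subseteq> B"
    proof
      fix y assume "y \<in> A" thus "y \<in> B" using u[of y] False by metis
    qed
    then have "card A \<le> card B" using assms(2) by (rule card_mono[rotated])
    then show ?thesis using assms(4) by simp
  next
    case True
    have "B \<subseteq> A"
    proof
      fix y assume "y \<in> B" thus "y \<in> A" using u[of y] True by metis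
    qed
    moreover have "B \<noteq> A" using assms(4) by auto
    ultimately show ?thesis by (rule psubsetI)
  qed
qed

theorem proposition2p14:
  fixes Xs :: "'a graph \<Rightarrow> 'a set set" and G G' :: "'a graph"
    and \<phi> :: "'a set \<Rightarrow> 'a set"
  assumes "Xset_param Xs"
    and "is_graph G" and "is_graph G'"
    and "no_isolated G" and "no_isolated G'"
    and "tar_iso Xs G G' \<phi>"
    and "\<forall>S\<in>Xs G. card (\<phi> S) = card S"
  shows "\<forall>S. minimal_Xset Xs G S \<longrightarrow> minimal_Xset Xs G' (\<phi> S) \<and> card (\<phi> S) = card S"
proof (intro allI impI)
  fix S assume m: "minimal_Xset Xs G S"
  have SX: "S \<in> Xs G" using m unfolding minimal_Xset_def by blast
  have bij: "bij_betw \<phi> (Xs G) (Xs G')" using assms(6) unfolding tar_iso_def by (rule conjunct1)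
  have adj: "\<forall>S\<in>Xs G. \<forall>T\<in>Xs G. tar_adj S T \<longleftrightarrow> tar_adj (\<phi> S) (\<phi> T)"
    using assms(6) unfolding tar_iso_def by (rule conjunct2)
  have pow: "\<And>H. is_graph H \<Longrightarrow> Xs H \<subseteq> Pow (verts H)"
   and sup: "\<And>H S T. is_graph H \<Longrightarrow> S \<in> Xs H \<Longrightarrow> S \<subseteq> T \<Longrightarrow> T \<subseteq> verts H \<Longrightarrow> T \<in> Xs H"
  proof -
    have c: "(\<forall>G. is_graph G \<longrightarrow> Xs G \<subseteq> Pow (verts G)) \<and>
     (\<forall>G S T. is_graph G \<longrightarrow> S \<in> Xs G \<longrightarrow> S \<subseteq> T \<longrightarrow> T \<subseteq> verts G \<longrightarrow> T \<in> Xs G)"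
      using assms(1) unfolding Xset_param_def by (elim conjE) (intro conjI)
    note c1 = conjunct1[OF c] and c2 = conjunct2[OF c]
    show "\<And>H. is_graph H \<Longrightarrow> Xs H \<subseteq> Pow (verts H)" by (rule c1[rule_format])
    show "\<And>H S T. is_graph H \<Longrightarrow> S \<in> Xs H \<Longrightarrow> S \<subseteq> T \<Longrightarrow> T \<subseteq> verts H \<Longrightarrow> T \<in> Xs H"
      by (rule c2[rule_format])
  qed
  have fv: "finite (verts G)" "finite (verts G')" using assms(2,3) unfolding is_graph_def by blast+
  have finG: "\<And>A. A \<in> Xs G \<Longrightarrow> finite A"
  proof -
    fix A assume "A \<in> Xs G"
    then have "A \<subseteq> verts G" using pow[OF assms(2)] by blast
    then show "finite A" using fv(1) finite_subset by blast
  qed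
  have finG': "\<And>A. A \<in> Xs G' \<Longrightarrow> finite A"
  proof -
    fix A assume "A \<in> Xs G'"
    then have "A \<subseteq> verts G'" using pow[OF assms(3)] by blast
    then show "finite A" using fv(2) finite_subset by blast
  qed
  have PX: "\<phi> S \<in> Xs G'" using bij SX bij_betwE by blast
  have cS: "card (\<phi> S) = card S" using assms(7) SX by blast
  have "\<forall>T'. T' \<subset> \<phi> S \<longrightarrow> T' \<notin> Xs G'"
  proof (intro allI impI notI)
    fix T' assume T'1: "T' \<subset> \<phi> S" and T'2: "T' \<in> Xs G'"
    obtain x where x: "x \<in> \<phi> S" "x \<notin> T'" using T'1 by blast
    define U where "U = \<phi> S - {x}"
    have UV: "U \<subseteq> verts G'" using PX pow[OF assms(3)] U_def by blast
    have TU: "T' \<subseteq> U" unfolding U_def using x T'1 by blast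
    have UX: "U \<in> Xs G'" by (rule sup[OF assms(3) T'2 TU UV])
    obtain T where T: "T \<in> Xs G" "\<phi> T = U" using bij UX
      by (metis bij_betw_def imageE)
    have fP: "finite (\<phi> S)" using finG' PX .
    have "sym_diff (\<phi> S) U = {x}" unfolding U_def sym_diff_def using x by auto
    hence "tar_adj (\<phi> S) (\<phi> T)" using T unfolding tar_adj_def by simp
    hence ta: "tar_adj S T" using bspec[OF bspec[OF adj SX] T(1)] by (simp only:)
    have "card U = card (\<phi> S) - 1" unfolding U_def using x fP by simp
    moreover have "card (\<phi> S) > 0" using fP x card_gt_0_iff by blast
    moreover have "card T = card U" using assms(7) T by metis
    ultimately have "card T < card S" using cS by linarith
    moreover have sd: "card (sym_diff S T) = 1" using ta unfolding tar_adj_def .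
    ultimately have TS: "T \<subset> S" by (rule symdiff_sub[OF finG[OF SX] finG[OF T(1)], rotated])
    have mm: "\<forall>T. T \<subset> S \<longrightarrow> T \<notin> Xs G" using m unfolding minimal_Xset_def by (rule conjunct2)
    show False using mm TS T(1) by blast
  qed
  thus "minimal_Xset Xs G' (\<phi> S) \<and> card (\<phi> S) = card S"
    using PX cS unfolding minimal_Xset_def by (intro conjI)
qed

end
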